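(* Let $\Delta^m$ be the last matrix produced by the Incremental Sweeping Algorithm applied to a connection matrix $\Delta\in\mathbb F^{m\times m}$. Then every entry of $\Delta^m$ at a primary pivot position is nonzero, and every nonzero entry of $\Delta^m$ either is at a primary pivot position or lies strictly above the unique primary pivot position of its column. In particular every column of $\Delta^m$ containing no primary pivot is zero.
   Context: Throughout, $\mathbb F$ is a field and $m\ge1$. $U^{pq}$ is the $m\times m$ matrix whose only nonzero entry is a $1$ in position $(p,q)$. Superscripts on matrices are indices, not powers. A connection matrix (over $\mathbb F$) is a matrix $\Delta\in\mathbb F^{m\times m}$ together with a partition $\{1,\dots,m\}=J_0\sqcup\cdots\sqcup J_b$ (the column/row partition; the $J_k$ need not consist of consecutive integers) such that $\Delta$ is upper triangular, $\Delta\Delta=0$, and $\Delta_{ij}=0$ unless $i<j$ and $(i,j)\in\bigcup_{k=1}^bJ_{k-1}\times J_k$. For $1\le r\le m-1$ the $r$-th diagonal is $\{(j-r,j):r<j\le m\}$. Incremental Sweeping Algorithm (ISA) applied to a connection matrix $\Delta$: set $\Delta^0=\Delta^1=\Delta$. For $r=1,\dots,m-1$ in turn: (Markup) for every position $(j-r,j)$ on the $r$-th diagonal with $\Delta^r_{j-r,j}\ne0$ such that no position in column $j$ was marked as a primary pivot at an earlier iteration: if some position $(j-r,p)$ of row $j-r$ was marked as a primary pivot at an earlier iteration, mark $(j-r,j)$ as a change-of-basis pivot of iteration $r$; otherwise mark $(j-r,j)$ permanently as a primary pivot (marked at iteration $r$). (Update) Let $T^r=I-\sum \frac{\Delta^r_{j-r,j}}{\Delta^r_{j-r,p}}U^{pj}$,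 the sum running over all change-of-basis pivots $(j-r,j)$ of iteration $r$, where $(j-r,p)$ is the primary pivot position in row $j-r$; set $\Delta^{r+1}=(T^r)^{-1}\Delta^rT^r$. The primary pivots of $\Delta^m$ are all positions marked as primary pivots at iterations $1,\dots,m-1$. *)

theory Defs
  imports "Jordan_Normal_Form.Gauss_Jordan_Elimination"
begin

text \<open>Matrices are Jordan_Normal_Form matrices; indices are 0-based, so the
 r-th diagonal consists of the positions (j - r, j) with r \<le> j < m.\<close>

definition connection_matrix :: "nat \<Rightarrow> 'a::field mat \<Rightarrow> bool" where
  "connection_matrix m D \<longleftrightarrow>
     D \<in> carrier_mat m m \<and> upper_triangular D \<and> D * D = 0\<^sub>m m m \<and>
     (\<exists>(lvl :: nat \<Rightarrow> nat) (b :: nat). (\<forall>i<m. lvl i \<le> b) \<and>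
        (\<forall>i<m. \<forall>j<m. D $$ (i, j) \<noteq> 0 \<longrightarrow>
            i < j \<and> 1 \<le> lvl j \<and> lvl i = lvl j - 1))"

definition has_prim_row :: "(nat \<times> nat) set \<Rightarrow> nat \<Rightarrow> bool" where
  "has_prim_row P i \<longleftrightarrow> (\<exists>p. (i, p) \<in> P)"

definition has_prim_col :: "(nat \<times> nat) set \<Rightarrow> nat \<Rightarrow> bool" where
  "has_prim_col P j \<longleftrightarrow> (\<exists>k. (k, j) \<in> P)"

definition prim_col_of_row :: "(nat \<times> nat) set \<Rightarrow> nat \<Rightarrow> nat" where
  "prim_col_of_row P i = (THE p. (i, p) \<in> P)"

text \<open>Columns j whose r-th diagonal position (j-r, j) is considered in the markup
 step of iteration r (nonzero entry, no earlier primary pivot in column j).\<close>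
definition isa_cand :: "nat \<Rightarrow> 'a::field mat \<Rightarrow> (nat \<times> nat) set \<Rightarrow> nat set" where
  "isa_cand r D P = {j. r \<le> j \<and> j < dim_col D \<and> D $$ (j - r, j) \<noteq> 0 \<and> \<not> has_prim_col P j}"

definition isa_cob :: "nat \<Rightarrow> 'a::field mat \<Rightarrow> (nat \<times> nat) set \<Rightarrow> nat set" where
  "isa_cob r D P = {j \<in> isa_cand r D P. has_prim_row P (j - r)}"

definition isa_newprim :: "nat \<Rightarrow> 'a::field mat \<Rightarrow> (nat \<times> nat) set \<Rightarrow> (nat \<times> nat) set" where
  "isa_newprim r D P = {(j - r, j) | j. j \<in> isa_cand r D P \<and> \<not> has_prim_row P (j - r)}"

definition isa_T :: "nat \<Rightarrow> 'a::field mat \<Rightarrow> (nat \<times> nat) set \<Rightarrow> 'a mat" where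
  "isa_T r D P = mat (dim_row D) (dim_col D) (\<lambda>(a, b).
      (if a = b then 1 else 0) -
      (\<Sum>j\<in>isa_cob r D P.
         D $$ (j - r, j) / D $$ (j - r, prim_col_of_row P (j - r)) *
         (if a = prim_col_of_row P (j - r) \<and> b = j then 1 else 0)))"

text \<open>One iteration r: state (Delta^r, primary pivots marked at iterations < r)
 to (Delta^(r+1), primary pivots marked at iterations \<le> r).\<close>
definition isa_step :: "nat \<Rightarrow> 'a::field mat \<times> (nat \<times> nat) set \<Rightarrow> 'a mat \<times> (nat \<times> nat) set" where
  "isa_step r S = (let D = fst S; P = snd S; T = isa_T r D P in
      (the (mat_inverse T) * D * T, P \<union> isa_newprim r D P))"

text \<open>isa_state D r = (Delta^r, primary pivots marked at iterations 1..r-1), r \<ge> 1.\<close>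
fun isa_state :: "'a::field mat \<Rightarrow> nat \<Rightarrow> 'a mat \<times> (nat \<times> nat) set" where
  "isa_state D 0 = (D, {})"
| "isa_state D (Suc 0) = (D, {})"
| "isa_state D (Suc (Suc r)) = isa_step (Suc r) (isa_state D (Suc r))"

end

theory Submission
  imports Defs
begin

lemma mult_entry:
  assumes "A \<in> carrier_mat n k" "B \<in> carrier_mat k l" "i < n" "j < l"
  shows "(A * B) $$ (i, j) = (\<Sum>t<k. A $$ (i, t) * B $$ (t, j))"
  using assms by (simp add: scalar_prod_def lessThan_atLeast0)

lemma sum_ind:
  fixes f :: "nat \<Rightarrow> 'a::field"
  assumes "finite B"
  shows "(\<Sum>j\<in>B. f j * (if a = g j \<and> b = j then 1 else 0)) = (if b \<in> B \<and> a = g b then f b else 0)"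
proof -
  have "(\<Sum>j\<in>B. f j * (if a = g j \<and> b = j then 1 else 0)) =
        (\<Sum>j\<in>B. if b = j then (if a = g b then f b else 0) else 0)"
    by (rule sum.cong) auto
  also have "\<dots> = (if b \<in> B \<and> a = g b then f b else 0)"
    using assms by (simp add: sum.delta)
  finally show ?thesis .
qed

definition inv_isa :: "nat \<Rightarrow> nat \<Rightarrow> 'a::field mat \<Rightarrow> (nat \<times> nat) set \<Rightarrow> bool" where
"inv_isa m r A P \<longleftrightarrow> A \<in> carrier_mat m m \<and>
  (\<forall>i<m. \<forall>j<m. A$$(i,j) \<noteq> 0 \<longrightarrow> i<j) \<and>
  (\<forall>i j. (i,j)\<in>P \<longrightarrow> i<j \<and> j<m \<and> j-i<r \<and> A$$(i,j) \<noteq> 0) \<and>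
  (\<forall>i j j'. (i,j)\<in>P \<longrightarrow> (i,j')\<in>P \<longrightarrow> j=j') \<and>
  (\<forall>i i' j. (i,j)\<in>P \<longrightarrow> (i',j)\<in>P \<longrightarrow> i=i') \<and>
  (\<forall>i<m. \<forall>j<m. A$$(i,j) \<noteq> 0 \<longrightarrow> j-i<r \<longrightarrow> (i,j)\<in>P \<or> (\<exists>k. (k,j)\<in>P \<and> i<k))"

lemma inv_step:
  fixes A :: "'a::field mat"
  assumes inv: "inv_isa m r A P" and r: "1 \<le> r"
  shows "inv_isa m (Suc r) (fst (isa_step r (A,P))) (snd (isa_step r (A,P)))"
proof -
  have A: "A \<in> carrier_mat m m"
    and tri: "\<And>i j. i<m \<Longrightarrow> j<m \<Longrightarrow> A$$(i,j) \<noteq> 0 \<Longrightarrow> i<j"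
    and Ppos: "\<And>i j. (i,j)\<in>P \<Longrightarrow> i<j \<and> j<m \<and> j-i<r \<and> A$$(i,j) \<noteq> 0"
    and rowu: "\<And>i j j'. (i,j)\<in>P \<Longrightarrow> (i,j')\<in>P \<Longrightarrow> j=j'"
    and colu: "\<And>i i' j. (i,j)\<in>P \<Longrightarrow> (i',j)\<in>P \<Longrightarrow> i=i'"
    and E: "\<And>i j. i<m \<Longrightarrow> j<m \<Longrightarrow> A$$(i,j) \<noteq> 0 \<Longrightarrow> j-i<r \<Longrightarrow> (i,j)\<in>P \<or> (\<exists>k. (k,j)\<in>P \<and> i<k)"
    using inv unfolding inv_isa_def by blast+
  have dims: "dim_row A = m" "dim_col A = m" using A by auto
  have L1: "\<And>q j a. (q,j)\<in>P \<Longrightarrow> q < a \<Longrightarrow> a < m \<Longrightarrow> A$$(a,j) = 0"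
  proof (rule ccontr)
    fix q j a assume qj: "(q,j)\<in>P" and qa: "q<a" and am: "a<m" and nz: "A$$(a,j) \<noteq> 0"
    from Ppos[OF qj] have "q<j" "j<m" "j-q<r" by auto
    with qa have "j - a < r" by linarith
    from E[OF am \<open>j<m\<close> nz this] show False
      using colu[OF qj] qa by force
  qed
  have L2: "\<And>j a. \<not> has_prim_col P j \<Longrightarrow> a < m \<Longrightarrow> j < m \<Longrightarrow> j - a < r \<Longrightarrow> A$$(a,j) = 0"
    using E unfolding has_prim_col_def by blast
  define B where "B = isa_cob r A P"
  define \<pi> where "\<pi> = prim_col_of_row P"
  define c where "c = (\<lambda>b. A$$(b-r,b) / A$$(b-r, \<pi>(b-r)))"
  define N where "N = mat m m (\<lambda>(a,b). if b\<in>B \<and> a = \<pi>(b-r) then c b else 0)"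
  have N: "N \<in> carrier_mat m m" unfolding N_def by auto
  have Bprop: "r \<le> b \<and> b < m \<and> A$$(b-r,b) \<noteq> 0 \<and> \<not> has_prim_col P b \<and> (b-r, \<pi>(b-r)) \<in> P"
    if "b \<in> B" for b
  proof -
    from that have 1: "r \<le> b \<and> b < m \<and> A$$(b-r,b) \<noteq> 0 \<and> \<not> has_prim_col P b"
      and "has_prim_row P (b-r)"
      unfolding B_def isa_cob_def isa_cand_def using dims by auto
    then obtain p where p: "(b-r,p) \<in> P" unfolding has_prim_row_def by auto
    have "\<pi>(b-r) = p" unfolding \<pi>_def prim_col_of_row_def
      using p rowu by blast
    with 1 p show ?thesis by auto
  qed
  have piv: "\<pi>(b-r) < b \<and> b - r < \<pi>(b-r) \<and> \<pi>(b-r) < m \<and> A$$(b-r,\<pi>(b-r)) \<noteq> 0" if "b\<in>B" for b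
    using Bprop[OF that] Ppos[of "b-r" "\<pi>(b-r)"] by auto
  have Bfin: "finite B" using Bprop by (meson finite_lessThan finite_subset lessThan_iff subsetI)
  have T: "isa_T r A P = 1\<^sub>m m - N"
  proof (rule eq_matI)
    fix a b assume ab: "a < dim_row (1\<^sub>m m - N)" "b < dim_col (1\<^sub>m m - N)"
    hence ab': "a < m" "b < m" using N by auto
    have "isa_T r A P $$ (a,b) = (if a = b then 1 else 0) -
      (\<Sum>j\<in>B. c j * (if a = \<pi> (j - r) \<and> b = j then 1 else 0))"
      unfolding isa_T_def using ab' dims by (simp add: B_def c_def \<pi>_def)
    also have "\<dots> = (if a = b then 1 else 0) - (if b \<in> B \<and> a = \<pi>(b-r) then c b else 0)"
      by (simp add: sum_ind[OF Bfin])
    finally show "isa_T r A P $$ (a,b) = (1\<^sub>m m - N) $$ (a,b)"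
      using ab' N by (simp add: N_def)
  qed (use N dims in \<open>auto simp: isa_T_def\<close>)

  have Nent: "N$$(a,b) = (if b\<in>B \<and> a = \<pi>(b-r) then c b else 0)" if "a<m" "b<m" for a b
    using that unfolding N_def by simp
  have NN: "N * N = 0\<^sub>m m m"
  proof (rule eq_matI)
    fix a b assume "a < dim_row (0\<^sub>m m m :: 'a mat)" "b < dim_col (0\<^sub>m m m :: 'a mat)"
    hence ab: "a<m" "b<m" by auto
    have "(N*N)$$(a,b) = (\<Sum>t<m. N$$(a,t) * N$$(t,b))" using mult_entry[OF N N ab] .
    also have "\<dots> = 0"
    proof (rule sum.neutral, rule ballI)
      fix t assume "t \<in> {..<m}"
      hence t: "t<m" by auto
      show "N$$(a,t) * N$$(t,b) = 0"
      proof (rule ccontr)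
        assume "N$$(a,t) * N$$(t,b) \<noteq> 0"
        hence "t \<in> B" "b \<in> B" "t = \<pi>(b-r)" using Nent ab t by (auto split: if_splits)
        thus False using Bprop[of t] Bprop[of b] unfolding has_prim_col_def by auto
      qed
    qed
    finally show "(N*N)$$(a,b) = (0\<^sub>m m m :: 'a mat)$$(a,b)" using ab by simp
  qed (use N in auto)
  have one: "1\<^sub>m m \<in> carrier_mat m m" by simp
  have P1: "(1\<^sub>m m - N) * (1\<^sub>m m + N) = 1\<^sub>m m"
  proof -
    have "(1\<^sub>m m - N) * (1\<^sub>m m + N) = (1\<^sub>m m * (1\<^sub>m m + N)) - N * (1\<^sub>m m + N)"
      by (rule minus_mult_distrib_mat) (use N in auto)
    also have "\<dots> = (1\<^sub>m m + N) - (N * 1\<^sub>m m + N * N)"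
      using N by (simp add: mult_add_distrib_mat[OF N one N])
    also have "\<dots> = 1\<^sub>m m" using N NN by (intro eq_matI) auto
    finally show ?thesis .
  qed
  have P2: "(1\<^sub>m m + N) * (1\<^sub>m m - N) = 1\<^sub>m m"
  proof -
    have "(1\<^sub>m m + N) * (1\<^sub>m m - N) = (1\<^sub>m m * (1\<^sub>m m - N)) + N * (1\<^sub>m m - N)"
      by (rule add_mult_distrib_mat) (use N in auto)
    also have "\<dots> = (1\<^sub>m m - N) + (N * 1\<^sub>m m - N * N)"
      using N by (simp add: mult_minus_distrib_mat[OF N one N])
    also have "\<dots> = 1\<^sub>m m" using N NN by (intro eq_matI) auto
    finally show ?thesis .
  qed
  have Tc: "1\<^sub>m m - N \<in> carrier_mat m m" "1\<^sub>m m + N \<in> carrier_mat m m" using N by auto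
  have Tinv: "the (mat_inverse (1\<^sub>m m - N)) = 1\<^sub>m m + N"
  proof (cases "mat_inverse (1\<^sub>m m - N)")
    case None
    from mat_inverse(1)[OF Tc(1) None, of undefined] P1 P2 Tc show ?thesis
      by (auto simp: Units_def ring_mat_def)
  next
    case (Some S)
    from mat_inverse(2)[OF Tc(1) Some] have S: "S * (1\<^sub>m m - N) = 1\<^sub>m m" "S \<in> carrier_mat m m" by auto
    have "S = S * ((1\<^sub>m m - N) * (1\<^sub>m m + N))" using P1 S by simp
    also have "\<dots> = (S * (1\<^sub>m m - N)) * (1\<^sub>m m + N)" using assoc_mult_mat[OF S(2) Tc(1) Tc(2)] by simp
    also have "\<dots> = 1\<^sub>m m + N" using S Tc N by simp
    finally show ?thesis using Some by simp
  qed

  define A' where "A' = (1\<^sub>m m + N) * A * (1\<^sub>m m - N)"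
  define P' where "P' = P \<union> isa_newprim r A P"
  have step: "isa_step r (A,P) = (A', P')"
    by (simp add: isa_step_def Let_def T Tinv A'_def P'_def)
  have NA: "N * A \<in> carrier_mat m m" using N A by auto
  have ApNA: "A + N * A \<in> carrier_mat m m" using NA A by auto
  have A'eq: "A' = (A + N*A) - (A*N + N*A*N)"
  proof -
    have "(1\<^sub>m m + N) * A = 1\<^sub>m m * A + N * A" by (rule add_mult_distrib_mat[OF one N A])
    also have "\<dots> = A + N * A" using A by simp
    finally have 1: "(1\<^sub>m m + N) * A = A + N * A" .
    have "(A + N*A) * (1\<^sub>m m - N) = (A + N*A) * 1\<^sub>m m - (A + N*A) * N"
      by (rule mult_minus_distrib_mat[OF ApNA one N])
    also have "\<dots> = (A + N*A) - (A*N + N*A*N)"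
      using ApNA add_mult_distrib_mat[OF A NA N] right_mult_one_mat[OF ApNA] by simp
    finally show ?thesis unfolding A'_def 1 .
  qed
  have A'c: "A' \<in> carrier_mat m m" unfolding A'eq using A N by auto
  have A'ent: "A'$$(a,b) = A$$(a,b) + (N*A)$$(a,b) - ((A*N)$$(a,b) + (N*A*N)$$(a,b))"
    if "a<m" "b<m" for a b
    unfolding A'eq using that A N by simp
  have Yv: "(M*N)$$(a,b) = (if b\<in>B then c b * M$$(a,\<pi>(b-r)) else 0)"
    if M: "M \<in> carrier_mat m m" and ab: "a<m" "b<m" for M a b
  proof -
    have "(M*N)$$(a,b) = (\<Sum>t<m. M$$(a,t) * N$$(t,b))" using mult_entry[OF M N ab] .
    also have "\<dots> = (\<Sum>t<m. if t = \<pi>(b-r) then (if b \<in> B then c b * M$$(a,\<pi>(b-r)) else 0) else 0)"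
      by (rule sum.cong) (auto simp: Nent ab)
    also have "\<dots> = (if b\<in>B then c b * M$$(a,\<pi>(b-r)) else 0)"
      using piv[of b] by (simp add: sum.delta)
    finally show ?thesis .
  qed
  have Xnz: "\<exists>x\<in>B. \<pi>(x-r) = a \<and> M$$(x,b) \<noteq> 0"
    if M: "M \<in> carrier_mat m m" and ab: "a<m" "b<m" and nz: "(N*M)$$(a,b) \<noteq> 0" for M a b
  proof -
    have "(\<Sum>t<m. N$$(a,t) * M$$(t,b)) \<noteq> 0" using mult_entry[OF N M ab] nz by simp
    then obtain t where t: "t<m" "N$$(a,t) * M$$(t,b) \<noteq> 0"
      using sum.not_neutral_contains_not_neutral by blast
    thus ?thesis using Nent[OF ab(1) t(1)] by (auto split: if_splits)
  qed
  have Xz: "(N*A)$$(a,b) = 0"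
    if ab: "a<m" "b<m" and h: "\<And>x. x\<in>B \<Longrightarrow> \<pi>(x-r)=a \<Longrightarrow> A$$(x,b)=0" for a b
    using Xnz[OF A ab] h by blast
  have Zz: "(N*A*N)$$(a,b) = 0"
    if ab: "a<m" "b<m" and h: "\<And>x. x\<in>B \<Longrightarrow> b\<in>B \<Longrightarrow> \<pi>(x-r)=a \<Longrightarrow> A$$(x,\<pi>(b-r))=0" for a b
  proof (cases "b \<in> B")
    case True
    have "(N*A)$$(a,\<pi>(b-r)) = 0" using Xz[OF ab(1)] piv[OF True] h True by blast
    thus ?thesis using Yv[OF NA ab] True by simp
  qed (use Yv[OF NA ab] in simp)
  have Yz: "b \<notin> B \<Longrightarrow> a<m \<Longrightarrow> b<m \<Longrightarrow> (A*N)$$(a,b) = 0" for a b using Yv[OF A] by simp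
  have xgt: "x\<in>B \<Longrightarrow> \<pi>(x-r) < x" for x using piv by blast
  have newP: "(i,j) \<in> isa_newprim r A P \<longleftrightarrow> r \<le> j \<and> j < m \<and> i = j - r \<and> A$$(i,j) \<noteq> 0 \<and> \<not> has_prim_col P j \<and> \<not> has_prim_row P i" for i j
    unfolding isa_newprim_def isa_cand_def using dims by auto
  have BiffC: "j \<in> B \<longleftrightarrow> r \<le> j \<and> j < m \<and> A$$(j-r,j) \<noteq> 0 \<and> \<not> has_prim_col P j \<and> has_prim_row P (j-r)" for j
    unfolding B_def isa_cob_def isa_cand_def using dims by auto

  have Bm: "x \<in> B \<Longrightarrow> x < m" for x using Bprop by blast
  have G1: "A'$$(i,j) = 0" if ij: "i<m" "j<m" "j \<le> i" for i j
  proof -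
    have "A$$(i,j) = 0" using tri[OF ij(1,2)] ij(3) leD by blast
    moreover have "(N*A)$$(i,j) = 0"
    proof (rule Xz[OF ij(1,2)])
      fix x assume x: "x\<in>B" "\<pi>(x-r) = i"
      have "j < x" using xgt[OF x(1)] x(2) ij(3) by linarith
      thus "A$$(x,j)=0" using tri[OF Bm[OF x(1)] ij(2)] less_asym by blast
    qed
    moreover have "(A*N)$$(i,j) = 0"
      using Yv[OF A ij(1,2)] piv[of j] tri[of i "\<pi>(j-r)"] ij by auto
    moreover have "(N*A*N)$$(i,j) = 0"
    proof (rule Zz[OF ij(1,2)])
      fix x assume x: "x\<in>B" "j\<in>B" "\<pi>(x-r) = i"
      have "\<pi>(j-r) < x" using xgt[OF x(1)] piv[OF x(2)] x(3) ij by linarith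
      thus "A$$(x,\<pi>(j-r)) = 0" using tri[of x "\<pi>(j-r)"] Bm[OF x(1)] piv[OF x(2)] by force
    qed
    ultimately show ?thesis using A'ent[OF ij(1,2)] by simp
  qed
  have G2: "i<j \<and> j<m \<and> j-i<Suc r \<and> A'$$(i,j) \<noteq> 0" if ij: "(i,j)\<in>P'" for i j
  proof (cases "(i,j) \<in> P")
    case True
    note pp = Ppos[OF True]
    have jB: "j \<notin> B" using True BiffC unfolding has_prim_col_def by blast
    have "(N*A)$$(i,j) = 0"
    proof (rule Xz)
      fix x assume x: "x\<in>B" "\<pi>(x-r) = i"
      show "A$$(x,j)=0" using L1[OF True, of x] xgt[OF x(1)] x(2) Bm[OF x(1)] by blast
    qed (use pp in auto)
    moreover have "(A*N)$$(i,j) = 0" using Yz jB pp by auto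
    moreover have "(N*A*N)$$(i,j) = 0" by (rule Zz) (use pp jB in auto)
    ultimately show ?thesis using A'ent[of i j] pp by simp
  next
    case False
    have nw: "r \<le> j \<and> j < m \<and> i = j - r \<and> A$$(i,j) \<noteq> 0 \<and> \<not> has_prim_col P j \<and> \<not> has_prim_row P i"
      using ij False newP[of i j] unfolding P'_def by auto
    hence jB: "j \<notin> B" using BiffC by blast
    have im: "i < m" using nw by auto
    have "(N*A)$$(i,j) = 0"
    proof (rule Xz[OF im])
      fix x assume x: "x\<in>B" "\<pi>(x-r) = i"
      show "A$$(x,j) = 0" by (rule L2) (use nw xgt[OF x(1)] x Bm[OF x(1)] r in auto)
    qed (use nw in auto)
    moreover have "(A*N)$$(i,j) = 0" using Yz jB nw by auto
    moreover have "(N*A*N)$$(i,j) = 0" by (rule Zz) (use nw jB in auto)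
    ultimately show ?thesis using A'ent[OF im, of j] nw r by auto
  qed
  have G3: "j = j'" if "(i,j)\<in>P'" "(i,j')\<in>P'" for i j j'
    using that rowu newP[of i j] newP[of i j'] unfolding P'_def has_prim_row_def by auto
  have G4: "i = i'" if "(i,j)\<in>P'" "(i',j)\<in>P'" for i i' j
    using that colu newP[of i j] newP[of i' j] unfolding P'_def has_prim_col_def by auto

  have G5: "(i,j)\<in>P' \<or> (\<exists>k. (k,j)\<in>P' \<and> i<k)"
    if ij: "i<m" "j<m" and nz: "A'$$(i,j) \<noteq> 0" and d: "j - i < Suc r" for i j
  proof -
    have ilj: "i < j" using G1[OF ij] nz by (meson not_le)
    show ?thesis
    proof (cases "has_prim_col P j")
      case True
      then obtain q where q: "(q,j) \<in> P" unfolding has_prim_col_def by auto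
      have jB: "j \<notin> B" using True BiffC by blast
      show ?thesis
      proof (cases "i \<le> q")
        case True
        then show ?thesis using q unfolding P'_def by (cases "i = q") auto
      next
        case False
        hence qi: "q < i" by simp
        have "A$$(i,j) = 0" using L1[OF q qi ij(1)] .
        moreover have "(N*A)$$(i,j) = 0"
        proof (rule Xz[OF ij])
          fix x assume x: "x\<in>B" "\<pi>(x-r) = i"
          show "A$$(x,j)=0" using L1[OF q, of x] xgt[OF x(1)] x(2) Bm[OF x(1)] qi by simp
        qed
        moreover have "(A*N)$$(i,j) = 0" using Yz jB ij by auto
        moreover have "(N*A*N)$$(i,j) = 0" by (rule Zz) (use ij jB in auto)
        ultimately have False using A'ent[OF ij] nz by simp
        thus ?thesis ..
      qed
    next
      case False
      note nc = False
      have X0: "(N*A)$$(i,j) = 0"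
      proof (rule Xz[OF ij])
        fix x assume x: "x\<in>B" "\<pi>(x-r) = i"
        have "i < x" using xgt[OF x(1)] x(2) by simp
        hence "j - x < r" using d r by linarith
        thus "A$$(x,j)=0" using L2[OF nc Bm[OF x(1)] ij(2)] by simp
      qed
      show ?thesis
      proof (cases "j - i < r")
        case True
        have "A$$(i,j) = 0" using L2[OF nc ij(1) ij(2) True] .
        moreover have "(A*N)$$(i,j) = 0"
        proof (cases "j \<in> B")
          case jB: True
          have "j - r < i" using True ilj Bprop[OF jB] by linarith
          hence "A$$(i,\<pi>(j-r)) = 0" using L1[OF conjunct2[OF conjunct2[OF conjunct2[OF conjunct2[OF Bprop[OF jB]]]]]] ij(1) by blast
          thus ?thesis using Yv[OF A ij] by simp
        qed (use Yz ij in auto)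
        moreover have "(N*A*N)$$(i,j) = 0"
        proof (rule Zz[OF ij])
          fix x assume x: "x\<in>B" "j\<in>B" "\<pi>(x-r) = i"
          have "j - r < x" using True ilj Bprop[OF x(2)] xgt[OF x(1)] x(3) by linarith
          thus "A$$(x,\<pi>(j-r)) = 0"
            using L1[OF conjunct2[OF conjunct2[OF conjunct2[OF conjunct2[OF Bprop[OF x(2)]]]]]] Bm[OF x(1)] by blast
        qed
        ultimately have False using A'ent[OF ij] nz X0 by simp
        thus ?thesis ..
      next
        case False
        hence ir: "i = j - r" "r \<le> j" using d ilj by auto
        show ?thesis
        proof (cases "A$$(i,j) = 0")
          case True
          hence jB: "j \<notin> B" using BiffC ir by auto
          have "(A*N)$$(i,j) = 0" using Yz jB ij by auto
          moreover have "(N*A*N)$$(i,j) = 0" by (rule Zz) (use ij jB in auto)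
          ultimately have False using A'ent[OF ij] nz X0 True by simp
          thus ?thesis ..
        next
          case Anz: False
          show ?thesis
          proof (cases "has_prim_row P i")
            case False
            hence "(i,j) \<in> isa_newprim r A P" using newP[of i j] ir ij Anz nc by auto
            thus ?thesis unfolding P'_def by auto
          next
            case True
            hence jB: "j \<in> B" using BiffC ir ij Anz nc by auto
            have "(A*N)$$(i,j) = c j * A$$(i,\<pi>(j-r))" using Yv[OF A ij] jB by simp
            also have "\<dots> = A$$(i,j)" unfolding c_def using piv[OF jB] ir by simp
            finally have Y: "(A*N)$$(i,j) = A$$(i,j)" .
            have "(N*A*N)$$(i,j) = 0"
            proof (rule Zz[OF ij])
              fix x assume x: "x\<in>B" "j\<in>B" "\<pi>(x-r) = i"
              have "j - r < x" using ir xgt[OF x(1)] x(3) by linarith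
              thus "A$$(x,\<pi>(j-r)) = 0"
                using L1[OF conjunct2[OF conjunct2[OF conjunct2[OF conjunct2[OF Bprop[OF x(2)]]]]]] Bm[OF x(1)] by blast
            qed
            hence False using A'ent[OF ij] nz X0 Y by simp
            thus ?thesis ..
          qed
        qed
      qed
    qed
  qed
  have "inv_isa m (Suc r) A' P'"
    unfolding inv_isa_def using A'c G1 G2 G3 G4 G5 by (meson not_le)
  thus ?thesis using step by simp
qed

lemma inv_all:
  fixes D :: "'a::field mat"
  assumes cm: "connection_matrix m D"
  shows "inv_isa m (Suc r) (fst (isa_state D (Suc r))) (snd (isa_state D (Suc r)))"
proof (induction r)
  case 0
  have "D \<in> carrier_mat m m" "\<forall>i<m. \<forall>j<m. D$$(i,j) \<noteq> 0 \<longrightarrow> i<j"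
    using cm unfolding connection_matrix_def by blast+
  moreover have "\<not> (D$$(i,j) \<noteq> 0 \<and> j - i < Suc 0)" if "i<m" "j<m" for i j
  proof
    assume h: "D$$(i,j) \<noteq> 0 \<and> j - i < Suc 0"
    hence "i < j" using calculation(2) that by blast
    with h show False by linarith
  qed
  ultimately show ?case unfolding inv_isa_def by auto
next
  case (Suc r)
  have "isa_state D (Suc (Suc r)) = isa_step (Suc r) (fst (isa_state D (Suc r)), snd (isa_state D (Suc r)))"
    by simp
  thus ?case using inv_step[OF Suc.IH] by simp
qed

theorem mainTheorem3:
  fixes D :: "'a::field mat" and m :: nat
  assumes "1 \<le> m" and "connection_matrix m D"
  shows "(\<forall>(i, j) \<in> snd (isa_state D m). fst (isa_state D m) $$ (i, j) \<noteq> 0)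
       \<and> (\<forall>i<m. \<forall>j<m. fst (isa_state D m) $$ (i, j) \<noteq> 0 \<longrightarrow>
            (i, j) \<in> snd (isa_state D m) \<or>
            (\<exists>k. (k, j) \<in> snd (isa_state D m) \<and> i < k \<and>
                 (\<forall>k'. (k', j) \<in> snd (isa_state D m) \<longrightarrow> k' = k)))
       \<and> (\<forall>j<m. \<not> (\<exists>k. (k, j) \<in> snd (isa_state D m)) \<longrightarrow>
            (\<forall>i<m. fst (isa_state D m) $$ (i, j) = 0))"
proof -
  obtain r where mr: "m = Suc r" using assms(1) by (cases m) auto
  define A where "A = fst (isa_state D m)"
  define P where "P = snd (isa_state D m)"
  have inv: "inv_isa m m A P" using inv_all[OF assms(2), of r] mr unfolding A_def P_def by simp
  have tri: "\<And>i j. i<m \<Longrightarrow> j<m \<Longrightarrow> A$$(i,j) \<noteq> 0 \<Longrightarrow> i<j"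
    and Ppos: "\<And>i j. (i,j)\<in>P \<Longrightarrow> i<j \<and> j<m \<and> j-i<m \<and> A$$(i,j) \<noteq> 0"
    and colu: "\<And>i i' j. (i,j)\<in>P \<Longrightarrow> (i',j)\<in>P \<Longrightarrow> i=i'"
    and E: "\<And>i j. i<m \<Longrightarrow> j<m \<Longrightarrow> A$$(i,j) \<noteq> 0 \<Longrightarrow> j-i<m \<Longrightarrow> (i,j)\<in>P \<or> (\<exists>k. (k,j)\<in>P \<and> i<k)"
    using inv unfolding inv_isa_def by blast+
  have p1: "\<forall>(i, j) \<in> P. A $$ (i, j) \<noteq> 0" using Ppos by auto
  have p2: "\<forall>i<m. \<forall>j<m. A $$ (i, j) \<noteq> 0 \<longrightarrow> (i, j) \<in> P \<or>
            (\<exists>k. (k, j) \<in> P \<and> i < k \<and> (\<forall>k'. (k', j) \<in> P \<longrightarrow> k' = k))"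
  proof (intro allI impI)
    fix i j assume "i<m" "j<m" "A$$(i,j) \<noteq> 0"
    moreover have "j - i < m" using \<open>j<m\<close> by linarith
    ultimately have "(i,j)\<in>P \<or> (\<exists>k. (k,j)\<in>P \<and> i<k)" using E by blast
    thus "(i, j) \<in> P \<or> (\<exists>k. (k, j) \<in> P \<and> i < k \<and> (\<forall>k'. (k', j) \<in> P \<longrightarrow> k' = k))"
      using colu by blast
  qed
  have p3: "\<forall>j<m. \<not> (\<exists>k. (k, j) \<in> P) \<longrightarrow> (\<forall>i<m. A $$ (i, j) = 0)"
  proof (intro allI impI)
    fix j i assume "j<m" "\<not> (\<exists>k. (k, j) \<in> P)" "i<m"
    moreover have "j - i < m" using \<open>j<m\<close> by linarith
    ultimately show "A$$(i,j) = 0" using E by blast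
  qed
  show ?thesis using p1 p2 p3 unfolding A_def P_def by blast
qed

end
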